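(* Let $k\ge 3$. A binary linear $[N,k,D]$ Griesmer code $C$ is self-orthogonal if and only if $C$ is doubly-even.
   Context: A binary linear $[N,k,D]$ code is a Griesmer code if $N=\sum_{i=0}^{k-1}\lceil D/2^i\rceil$. A binary code is self-orthogonal if $C\subseteq C^\perp$ (standard inner product over $\mathbb{F}_2$). A binary code is doubly-even if every codeword has Hamming weight divisible by $4$. *)

theory Defs
  imports "HOL-Analysis.Analysis" "HOL-Library.Z2"
begin

definition hamming_weight :: "bit ^ 'n \<Rightarrow> nat" where
  "hamming_weight x = card {i. x $ i \<noteq> 0}"

definition hamming_dist :: "bit ^ 'n \<Rightarrow> bit ^ 'n \<Rightarrow> nat" where
  "hamming_dist x y = card {i. x $ i \<noteq> y $ i}"

definition bin_inner :: "bit ^ 'n \<Rightarrow> bit ^ 'n \<Rightarrow> bit" where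
  "bin_inner x y = (\<Sum>i\<in>UNIV. x $ i * y $ i)"

definition binary_linear_code :: "(bit ^ 'n) set \<Rightarrow> bool" where
  "binary_linear_code C \<longleftrightarrow> module.subspace ((*s) :: bit \<Rightarrow> bit ^ 'n \<Rightarrow> bit ^ 'n) C"

definition code_dim :: "(bit ^ 'n) set \<Rightarrow> nat" where
  "code_dim C = vector_space.dim ((*s) :: bit \<Rightarrow> bit ^ 'n \<Rightarrow> bit ^ 'n) C"

definition min_distance :: "(bit ^ 'n) set \<Rightarrow> nat" where
  "min_distance C = Min {hamming_dist x y | x y. x \<in> C \<and> y \<in> C \<and> x \<noteq> y}"

definition is_NkD_code :: "(bit ^ 'n) set \<Rightarrow> nat \<Rightarrow> nat \<Rightarrow> nat \<Rightarrow> bool" where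
  "is_NkD_code C N k D \<longleftrightarrow> binary_linear_code C \<and> N = CARD('n) \<and> code_dim C = k \<and> min_distance C = D"

definition griesmer :: "nat \<Rightarrow> nat \<Rightarrow> nat \<Rightarrow> bool" where
  "griesmer N k D \<longleftrightarrow> N = (\<Sum>i<k. nat \<lceil>real D / 2 ^ i\<rceil>)"

definition self_orthogonal :: "(bit ^ 'n) set \<Rightarrow> bool" where
  "self_orthogonal C \<longleftrightarrow> (\<forall>x\<in>C. \<forall>y\<in>C. bin_inner x y = 0)"

definition doubly_even :: "(bit ^ 'n) set \<Rightarrow> bool" where
  "doubly_even C \<longleftrightarrow> (\<forall>x\<in>C. 4 dvd hamming_weight x)"

end

theory Submission
  imports Defs
begin

lemma bit_UNIV: "(UNIV :: bit set) = {0, 1}"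
  by (auto intro: bit.exhaust)

instance bit :: finite
  by standard (simp add: bit_UNIV)

definition bsupp :: "bit ^ 'n \<Rightarrow> 'n set" where
  "bsupp x = {i. x $ i \<noteq> 0}"

lemma bit_add_ne0: "(a + b \<noteq> (0::bit)) \<longleftrightarrow> ((a \<noteq> 0) \<noteq> (b \<noteq> 0))"
  by (cases a; cases b) auto

lemma bit_self_add [simp]: "(a::bit) + a = 0"
  by (cases a) auto

lemma bsupp_add: "bsupp (x + y) = (bsupp x - bsupp y) \<union> (bsupp y - bsupp x)"
  unfolding bsupp_def using bit_add_ne0 by auto

lemma vec_self_add [simp]: "(x::bit^'n) + x = 0"
  by (simp add: vec_eq_iff)

lemma vec_add_eq0: "(x::bit^'n) + y = 0 \<Longrightarrow> x = y"
  by (metis add.assoc add_0 vec_self_add)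

lemma bsupp_empty: "bsupp x = {} \<longleftrightarrow> x = 0"
  unfolding bsupp_def by (auto simp: vec_eq_iff)

lemma bsupp_zero [simp]: "bsupp 0 = {}"
  by (simp add: bsupp_empty)

lemma hw_bsupp: "hamming_weight x = card (bsupp x)"
  by (simp add: hamming_weight_def bsupp_def)

lemma wt_add: "card (bsupp (x+y)) + 2 * card (bsupp x \<inter> bsupp y) = card (bsupp x) + card (bsupp y)"
proof -
  let ?A = "bsupp x" and ?B = "bsupp y"
  have "card (bsupp (x+y)) = card (?A - ?B) + card (?B - ?A)"
    unfolding bsupp_add by (rule card_Un_disjoint) auto
  moreover have "card ?A = card (?A - ?B) + card (?A \<inter> ?B)"
    by (metis Diff_Diff_Int finite card_Un_disjoint Diff_disjoint Un_Diff_Int Int_commute)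
  moreover have "card ?B = card (?B - ?A) + card (?A \<inter> ?B)"
    by (metis Diff_Diff_Int finite card_Un_disjoint Diff_disjoint Un_Diff_Int Int_commute)
  ultimately show ?thesis by simp
qed

lemma wt_add_sub: "card (bsupp x) + card (bsupp (x + c)) = card (bsupp c) + 2 * card (bsupp x - bsupp c)"
proof -
  let ?A = "bsupp x" and ?B = "bsupp c"
  have "card (bsupp (x+c)) = card (?A - ?B) + card (?B - ?A)"
    unfolding bsupp_add by (rule card_Un_disjoint) auto
  moreover have "card ?A = card (?A - ?B) + card (?A \<inter> ?B)"
    by (metis Diff_Diff_Int finite card_Un_disjoint Diff_disjoint Un_Diff_Int Int_commute)
  moreover have "card ?B = card (?B - ?A) + card (?A \<inter> ?B)"
    by (metis Diff_Diff_Int finite card_Un_disjoint Diff_disjoint Un_Diff_Int Int_commute)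
  ultimately show ?thesis by simp
qed

lemma of_nat_bit: "(of_nat n :: bit) = (if even n then 0 else 1)"
  by (induction n) auto

lemma sum_bit: "(\<Sum>i\<in>UNIV. (f (i::_::finite) :: bit)) = of_nat (card {i. f i \<noteq> 0})"
proof -
  have "(\<Sum>i\<in>UNIV. f i) = (\<Sum>i\<in>UNIV. if f i \<noteq> 0 then 1 else 0)"
    by (rule sum.cong) auto
  also have "\<dots> = (\<Sum>i\<in>{i\<in>UNIV. f i \<noteq> 0}. (1::bit))"
    by (rule sum.inter_filter[symmetric]) simp
  also have "\<dots> = of_nat (card {i. f i \<noteq> 0})"
    by (simp only: sum_constant mult_1_right UNIV_I simp_thms)
  finally show ?thesis .
qed

lemma bin_inner_card: "bin_inner x y = of_nat (card (bsupp x \<inter> bsupp y))"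
proof -
  have "{i. x $ i * y $ i \<noteq> 0} = bsupp x \<inter> bsupp y"
    unfolding bsupp_def by auto
  then show ?thesis unfolding bin_inner_def sum_bit by simp
qed

lemma bin_inner_0_iff: "bin_inner x y = 0 \<longleftrightarrow> even (card (bsupp x \<inter> bsupp y))"
  unfolding bin_inner_card of_nat_bit by simp

definition proj :: "bit ^ 'n \<Rightarrow> bit ^ 'n \<Rightarrow> bit ^ 'n" where
  "proj c x = (\<chi> i. if i \<in> bsupp c then 0 else x $ i)"

lemma bsupp_proj: "bsupp (proj c x) = bsupp x - bsupp c"
  unfolding proj_def bsupp_def by auto

lemma proj_add: "proj c (x + y) = proj c x + proj c y"
  unfolding proj_def by (simp add: vec_eq_iff)

lemma proj_zero_iff: "proj c x = 0 \<longleftrightarrow> bsupp x \<subseteq> bsupp c"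
  by (metis Diff_eq_empty_iff bsupp_empty bsupp_proj)

lemma halving:
  fixes V :: "(bit ^ 'n) set"
  assumes cl: "\<forall>x\<in>V. \<forall>y\<in>V. x + y \<in> V" and cV: "c \<in> V"
    and ker: "\<forall>z\<in>V. bsupp z \<subseteq> bsupp c \<longrightarrow> z = 0 \<or> z = c"
  shows "card V \<le> 2 * card (proj c ` V)"
proof -
  have eq: "(\<Union>y\<in>proj c ` V. {x\<in>V. proj c x = y}) = V" by auto
  have "card V \<le> (\<Sum>y\<in>proj c ` V. card {x\<in>V. proj c x = y})"
    using card_UN_le[OF finite[of "proj c ` V"], of "\<lambda>y. {x\<in>V. proj c x = y}"] by (simp only: eq)
  also have "\<dots> \<le> (\<Sum>y\<in>proj c ` V. 2)"
  proof (rule sum_mono)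
    fix y assume "y \<in> proj c ` V"
    then obtain x0 where x0: "x0 \<in> V" "y = proj c x0" by auto
    have "{x\<in>V. proj c x = y} \<subseteq> {x0, x0 + c}"
    proof
      fix x assume x: "x \<in> {x\<in>V. proj c x = y}"
      then have "x + x0 \<in> V" using cl x0 by auto
      moreover have "proj c (x + x0) = 0" using x x0 by (simp add: proj_add)
      ultimately have "x + x0 = 0 \<or> x + x0 = c" using ker proj_zero_iff by blast
      then show "x \<in> {x0, x0 + c}"
        by (metis add.assoc add.commute add_0 insert_iff vec_add_eq0 vec_self_add)
    qed
    then have "card {x\<in>V. proj c x = y} \<le> card {x0, x0 + c}" by (rule card_mono[OF finite])
    also have "\<dots> \<le> 2" by (simp add: card_insert_le_m1)
    finally show "card {x\<in>V. proj c x = y} \<le> 2" .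
  qed
  also have "\<dots> = 2 * card (proj c ` V)" by simp
  finally show ?thesis .
qed

fun g :: "nat \<Rightarrow> nat \<Rightarrow> nat" where
  "g 0 d = 0"
| "g (Suc k) d = d + g k ((d + 1) div 2)"

lemma g_mono: "d \<le> d' \<Longrightarrow> g k d \<le> g k d'"
proof (induction k arbitrary: d d')
  case 0 then show ?case by simp
next
  case (Suc k)
  have "(d + 1) div 2 \<le> (d' + 1) div 2" using Suc.prems by (simp add: div_le_mono)
  then show ?case using Suc.IH[of "(d + 1) div 2" "(d' + 1) div 2"] Suc.prems by simp
qed

lemma g_strict: "g (Suc k) d < g (Suc k) (d + 1)"
proof -
  have "(d + 1) div 2 \<le> (d + 1 + 1) div 2" by (simp add: div_le_mono)
  then have "g k ((d + 1) div 2) \<le> g k ((d + 1 + 1) div 2)" by (rule g_mono)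
  then show ?thesis by simp
qed

lemma griesmer_bound:
  fixes V :: "(bit ^ 'n) set" and T :: "'n set"
  assumes "0 \<in> V" "\<forall>x\<in>V. \<forall>y\<in>V. x + y \<in> V" "2 ^ k \<le> card V"
    "\<forall>x\<in>V. bsupp x \<subseteq> T" "\<forall>x\<in>V. x \<noteq> 0 \<longrightarrow> d \<le> card (bsupp x)"
  shows "g k d \<le> card T"
  using assms
proof (induction k arbitrary: V T d)
  case 0 then show ?case by simp
next
  case (Suc k)
  have "card V \<ge> 2" proof -
    have "(2::nat) \<le> 2 ^ Suc k" by simp
    then show ?thesis using Suc.prems(3) by linarith
  qed
  have "\<exists>x\<in>V. x \<noteq> 0"
  proof (rule ccontr)
    assume "\<not> (\<exists>x\<in>V. x \<noteq> 0)"
    then have "V \<subseteq> {0}" by auto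
    then have "card V \<le> 1" using card_mono[OF finite, of V "{0}"] by simp
    then show False using \<open>card V \<ge> 2\<close> by simp
  qed
  then obtain c where c: "c \<in> V" "c \<noteq> 0" "\<forall>y. y \<in> V \<and> y \<noteq> 0 \<longrightarrow> card (bsupp c) \<le> card (bsupp y)"
    using ex_has_least_nat[of "\<lambda>x. x \<in> V \<and> x \<noteq> 0" _ "\<lambda>x. card (bsupp x)"] by blast
  define w where "w = card (bsupp c)"
  have wd: "d \<le> w" using Suc.prems(5) c unfolding w_def by blast
  have ker: "\<forall>z\<in>V. bsupp z \<subseteq> bsupp c \<longrightarrow> z = 0 \<or> z = c"
  proof (intro ballI impI)
    fix z assume z: "z \<in> V" "bsupp z \<subseteq> bsupp c"
    show "z = 0 \<or> z = c"
    proof (rule ccontr)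
      assume "\<not> (z = 0 \<or> z = c)"
      then have nz: "z \<noteq> 0" "z + c \<noteq> 0" using vec_add_eq0 by auto
      have "z + c \<in> V" using Suc.prems(2) z c by auto
      then have "w \<le> card (bsupp (z + c))" using c nz unfolding w_def by blast
      moreover have "w \<le> card (bsupp z)" using c nz z unfolding w_def by blast
      moreover have "card (bsupp z) + card (bsupp (z + c)) = w"
        using wt_add_sub[of z c] z(2) unfolding w_def by simp
      moreover have "card (bsupp z) > 0" using nz bsupp_empty
        by (metis card_gt_0_iff finite)
      ultimately show False by linarith
    qed
  qed
  define V' where "V' = proj c ` V"
  define T' where "T' = T - bsupp c"
  have "card V \<le> 2 * card V'" unfolding V'_def by (rule halving[OF Suc.prems(2) c(1) ker])
  then have c1: "2 ^ k \<le> card V'" using Suc.prems(3) by simp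
  have c2: "0 \<in> V'" unfolding V'_def using Suc.prems(1) by (metis image_eqI proj_zero_iff bsupp_zero empty_subsetI)
  have c3: "\<forall>x\<in>V'. \<forall>y\<in>V'. x + y \<in> V'" unfolding V'_def using Suc.prems(2)
    by (auto simp flip: proj_add)
  have c4: "\<forall>x\<in>V'. bsupp x \<subseteq> T'" unfolding V'_def T'_def using Suc.prems(4)
    by (auto simp: bsupp_proj)
  have c5: "\<forall>x\<in>V'. x \<noteq> 0 \<longrightarrow> (d + 1) div 2 \<le> card (bsupp x)"
  proof (intro ballI impI)
    fix y assume "y \<in> V'" "y \<noteq> 0"
    then obtain x where x: "x \<in> V" "y = proj c x" unfolding V'_def by auto
    have "x \<noteq> 0" "x + c \<noteq> 0" using x \<open>y \<noteq> 0\<close> by (metis proj_zero_iff bsupp_zero empty_subsetI subset_refl vec_add_eq0)+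
    moreover have "x + c \<in> V" using Suc.prems(2) x c by auto
    ultimately have "w \<le> card (bsupp x)" "w \<le> card (bsupp (x + c))" using c x unfolding w_def by auto
    moreover have "card (bsupp x) + card (bsupp (x + c)) = w + 2 * card (bsupp y)"
      using wt_add_sub[of x c] x unfolding w_def by (simp add: bsupp_proj)
    ultimately show "(d + 1) div 2 \<le> card (bsupp y)" using wd by linarith
  qed
  have "g k ((d + 1) div 2) \<le> card T'" using Suc.IH[OF c2 c3 c1 c4 c5] .
  moreover have "card T = card T' + w" unfolding T'_def w_def
    using Suc.prems(4) c(1) by (metis card_Diff_subset finite le_add_diff_inverse2 card_mono)
  ultimately show ?case using wd by simp
qed

lemma card_subspace:
  assumes lin: "vec.subspace (C :: (bit ^ 'n) set)"
  shows "card C = 2 ^ vec.dim C"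
proof -
  obtain B where B: "B \<subseteq> C" "vec.independent B" "C \<subseteq> vec.span B" "card B = vec.dim C"
    by (rule vec.basis_exists)
  have span: "vec.span B = C" using vec.span_subspace[OF B(1) B(3) lin] .
  have fB: "finite B" by simp
  define f where "f S = (\<Sum>v\<in>B. (if v \<in> S then 1 else 0) *s v)" for S
  have img: "f ` Pow B = C"
  proof
    show "f ` Pow B \<subseteq> C"
      unfolding f_def span[symmetric] vec.span_finite[OF fB] by auto
  next
    show "C \<subseteq> f ` Pow B"
    proof
      fix x assume "x \<in> C"
      then obtain u where u: "x = (\<Sum>v\<in>B. u v *s v)"
        unfolding span[symmetric] vec.span_finite[OF fB] by auto
      have "x = f {v\<in>B. u v = 1}" unfolding u f_def
        apply (intro sum.cong refl)
        subgoal for v by (cases "u v") auto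
        done
      then show "x \<in> f ` Pow B" by auto
    qed
  qed
  have inj: "inj_on f (Pow B)"
  proof (rule inj_onI)
    fix S S' assume S: "S \<in> Pow B" "S' \<in> Pow B" "f S = f S'"
    define u where "u v = (if v \<in> S then 1 else 0) - (if v \<in> S' then (1::bit) else 0)" for v
    have "(\<Sum>v\<in>B. u v *s v) = (\<Sum>v\<in>B. (if v \<in> S then 1 else 0) *s v - (if v \<in> S' then 1 else 0) *s v)"
      unfolding u_def by (simp only: vec.scale_left_diff_distrib)
    also have "\<dots> = f S - f S'" unfolding f_def by (rule sum_subtractf)
    finally have "(\<Sum>v\<in>B. u v *s v) = f S - f S'" .
    then have "(\<Sum>v\<in>B. u v *s v) = 0" using S(3) by simp
    then have u0: "\<And>v. v \<in> B \<Longrightarrow> u v = 0"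
      using B(2)[unfolded vec.independent_explicit_finite_subsets, rule_format, OF subset_refl fB] by blast
    have "\<forall>v\<in>B. (v \<in> S) = (v \<in> S')"
    proof
      fix v assume "v \<in> B"
      then have "u v = 0" by (rule u0)
      then show "(v \<in> S) = (v \<in> S')" by (cases "v \<in> S"; cases "v \<in> S'") (simp_all add: u_def)
    qed
    then show "S = S'" using S(1,2) by blast
  qed
  have "card C = card (Pow B)" using card_image[OF inj] img by simp
  also have "\<dots> = 2 ^ card B" by (rule card_Pow[OF fB])
  finally show ?thesis using B(4) by simp
qed

lemma ceil_nat:
  assumes "m > 0"
  shows "nat \<lceil>real d / real m\<rceil> = (d + m - 1) div m"
proof -
  define q where "q = (d + m - 1) div m"
  have h0: "q * m + (d + m - 1) mod m = d + m - 1" unfolding q_def by simp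
  have hm: "(d + m - 1) mod m < m" using assms by simp
  have h1: "q * m < d + m" using h0 assms by linarith
  have h2: "d \<le> q * m" using h0 hm assms by linarith
  have r2: "real d \<le> real q * real m" using h2 by (metis of_nat_le_iff of_nat_mult)
  have r1: "real q * real m < real d + real m" using h1 by (metis of_nat_less_iff of_nat_mult of_nat_add)
  have mpos: "real m > 0" using assms by simp
  have "real d / real m \<le> real q"
    using r2 mpos by (simp add: divide_simps)
  moreover have "real q - 1 < real d / real m"
    using r1 mpos by (simp add: divide_simps algebra_simps)
  ultimately have "\<lceil>real d / real m\<rceil> = int q"
    by (intro ceiling_unique) auto
  then show ?thesis unfolding q_def by simp
qed

lemma div_aux: "(P::nat) > 0 \<Longrightarrow> (d + 2 * P - 1) div 2 = (d + 1) div 2 + P - 1"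
  by presburger

lemma griesmer_g: "(\<Sum>i<k. nat \<lceil>real d / 2 ^ i\<rceil>) = g k d"
proof (induction k arbitrary: d)
  case 0 then show ?case by simp
next
  case (Suc k)
  have "(\<Sum>i<Suc k. nat \<lceil>real d / 2 ^ i\<rceil>) = d + (\<Sum>i<k. nat \<lceil>real d / 2 ^ Suc i\<rceil>)"
    by (subst sum.lessThan_Suc_shift) simp
  also have "(\<Sum>i<k. nat \<lceil>real d / 2 ^ Suc i\<rceil>) = (\<Sum>i<k. nat \<lceil>real ((d + 1) div 2) / 2 ^ i\<rceil>)"
  proof (rule sum.cong[OF refl])
    fix i
    have p: "(2::nat) ^ i > 0" by simp
    have "nat \<lceil>real d / real (2 ^ Suc i)\<rceil> = (d + 2 ^ Suc i - 1) div 2 ^ Suc i"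
      by (rule ceil_nat) simp
    then have "nat \<lceil>real d / 2 ^ Suc i\<rceil> = (d + 2 ^ Suc i - 1) div 2 ^ Suc i"
      by (simp only: of_nat_power of_nat_numeral)
    also have "\<dots> = (d + 2 * 2 ^ i - 1) div 2 div 2 ^ i" by (simp add: div_mult2_eq)
    also have "(d + 2 * 2 ^ i - 1) div 2 = (d + 1) div 2 + 2 ^ i - 1" using p div_aux by blast
    also have "((d + 1) div 2 + 2 ^ i - 1) div 2 ^ i = nat \<lceil>real ((d + 1) div 2) / real (2 ^ i)\<rceil>"
      by (rule ceil_nat[symmetric]) simp
    also have "\<dots> = nat \<lceil>real ((d + 1) div 2) / 2 ^ i\<rceil>"
      by (simp only: of_nat_power of_nat_numeral)
    finally show "nat \<lceil>real d / 2 ^ Suc i\<rceil> = nat \<lceil>real ((d + 1) div 2) / 2 ^ i\<rceil>" .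
  qed
  finally show ?case using Suc.IH by simp
qed

lemma ar1: assumes "(b::nat) mod 4 = (a + w) mod 4" "even a" "w mod 4 = 2" shows "(a + b) mod 4 = 2"
proof -
  have ha: "a mod 4 = 0 \<or> a mod 4 = 2" using assms(2) by presburger
  have hb: "b mod 4 = (a mod 4 + w mod 4) mod 4" using assms(1) by (simp add: mod_add_eq)
  have hs: "(a + b) mod 4 = (a mod 4 + b mod 4) mod 4" by (simp add: mod_add_eq)
  from ha show ?thesis
  proof
    assume "a mod 4 = 0" then show ?thesis using hb hs assms(3) by simp
  next
    assume "a mod 4 = 2" then show ?thesis using hb hs assms(3) by simp
  qed
qed
lemma ar5: assumes "even (a::nat)" "a mod 4 \<noteq> 2" "b mod 4 = (a + w) mod 4" "w mod 4 = 2" shows "b mod 4 = 2"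
proof -
  have ha: "a mod 4 = 0" using assms(1,2) by presburger
  have hb: "b mod 4 = (a mod 4 + w mod 4) mod 4" using assms(3) by (simp add: mod_add_eq)
  show ?thesis using ha hb assms(4) by simp
qed
lemma ar2: assumes "(a::nat) + b = w + 2*e" "(a+b) mod 4 = 2" "w mod 4 = 2" shows "even e"
proof -
  have r: "(2*e) mod 4 = 0 \<or> (2*e) mod 4 = 2" by presburger
  have h: "(w + 2*e) mod 4 = (w mod 4 + (2*e) mod 4) mod 4" by (simp add: mod_add_eq)
  have "(w + 2*e) mod 4 = 2" using assms(1,2) by simp
  then have "(2*e) mod 4 = 0" using r h assms(3) by auto
  then show ?thesis by presburger
qed

lemma ar3: "even (e::nat) \<Longrightarrow> D \<le> 2*e \<Longrightarrow> D mod 4 = 2 \<Longrightarrow> (D+1) div 2 + 1 \<le> e" by presburger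
lemma ar4: "D \<le> 2*(e::nat) \<Longrightarrow> (D+1) div 2 \<le> e" by presburger
lemma ar6: "even (c::nat) \<Longrightarrow> a + 2 * c = b \<Longrightarrow> a mod 4 = b mod 4" by presburger
lemma ar7: "(a::nat) mod 4 = 2 \<Longrightarrow> \<not> 4 dvd a" by presburger
lemma ar8: "even (a::nat) \<Longrightarrow> \<not> 4 dvd a \<Longrightarrow> a mod 4 = 2" by presburger
lemma ar9: "4 dvd (a::nat) \<Longrightarrow> 4 dvd b \<Longrightarrow> 4 dvd c \<Longrightarrow> c + 2 * e = a + b \<Longrightarrow> even e" by presburger

theorem proposition3p8:
  fixes C :: "(bit ^ 'n) set" and N k D :: nat
  assumes "k \<ge> 3"
    and "is_NkD_code C N k D"
    and "griesmer N k D"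
  shows "self_orthogonal C \<longleftrightarrow> doubly_even C"
proof -
  from assms(2) have lin: "vec.subspace C" and NN: "N = CARD('n)" and kd: "vec.dim C = k"
    and DD: "min_distance C = D"
    unfolding is_NkD_code_def binary_linear_code_def code_dim_def by auto
  have z: "0 \<in> C" by (rule vec.subspace_0[OF lin])
  have cl: "\<forall>x\<in>C. \<forall>y\<in>C. x + y \<in> C" using vec.subspace_add[OF lin] by blast
  have cardC: "card C = 2 ^ k" using card_subspace[OF lin] kd by simp
  have wD: "\<forall>x\<in>C. x \<noteq> 0 \<longrightarrow> D \<le> card (bsupp x)"
  proof (intro ballI impI)
    fix x assume x: "x \<in> C" "x \<noteq> 0"
    let ?S = "{hamming_dist x y | x y. x \<in> C \<and> y \<in> C \<and> x \<noteq> y}"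
    have "?S \<subseteq> {..CARD('n)}"
      unfolding hamming_dist_def by (auto intro: card_mono)
    then have fin: "finite ?S" by (rule finite_subset) simp
    have h: "hamming_dist x 0 = card (bsupp x)" unfolding hamming_dist_def bsupp_def by simp
    have m: "hamming_dist x 0 \<in> ?S" using x z by blast
    have "D = Min ?S" using DD unfolding min_distance_def by simp
    then show "D \<le> card (bsupp x)" using Min_le[OF fin m] h by simp
  qed
  have NG: "N = g k D" using assms(3) griesmer_g unfolding griesmer_def by simp
  show ?thesis
  proof
    assume so: "self_orthogonal C"
    have ev: "\<forall>x\<in>C. even (card (bsupp x))"
    proof
      fix x assume "x \<in> C"
      then have "even (card (bsupp x \<inter> bsupp x))" using so unfolding self_orthogonal_def bin_inner_0_iff by blast
      then show "even (card (bsupp x))" by simp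
    qed
    have add4: "\<forall>x\<in>C. \<forall>y\<in>C. card (bsupp (x + y)) mod 4 = (card (bsupp x) + card (bsupp y)) mod 4"
    proof (intro ballI)
      fix x y assume "x \<in> C" "y \<in> C"
      then have "even (card (bsupp x \<inter> bsupp y))" using so unfolding self_orthogonal_def bin_inner_0_iff by auto
      then show "card (bsupp (x + y)) mod 4 = (card (bsupp x) + card (bsupp y)) mod 4"
        using ar6[OF _ wt_add[of x y]] by blast
    qed
    show "doubly_even C"
    proof (rule ccontr)
      assume "\<not> doubly_even C"
      then obtain x0 where "x0 \<in> C" "\<not> 4 dvd card (bsupp x0)"
        unfolding doubly_even_def hw_bsupp by auto
      moreover have "even (card (bsupp x0))" using ev \<open>x0 \<in> C\<close> by blast
      ultimately have "x0 \<in> C \<and> card (bsupp x0) mod 4 = 2" using ar8 by blast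
      then obtain c where c: "c \<in> C" "card (bsupp c) mod 4 = 2"
        and cmin: "\<forall>y. y \<in> C \<and> card (bsupp y) mod 4 = 2 \<longrightarrow> card (bsupp c) \<le> card (bsupp y)"
        using ex_has_least_nat[of "\<lambda>x. x \<in> C \<and> card (bsupp x) mod 4 = 2" x0 "\<lambda>x. card (bsupp x)"] by blast
      define w where "w = card (bsupp c)"
      have c0: "c \<noteq> 0" using c(2) by auto
      have wD': "D \<le> w" using wD c c0 unfolding w_def by blast
      have w4: "w mod 4 = 2" using c(2) unfolding w_def .
      have ker: "\<forall>z\<in>C. bsupp z \<subseteq> bsupp c \<longrightarrow> z = 0 \<or> z = c"
      proof (intro ballI impI)
        fix z assume zz: "z \<in> C" "bsupp z \<subseteq> bsupp c"
        show "z = 0 \<or> z = c"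
        proof (rule ccontr)
          assume "\<not> (z = 0 \<or> z = c)"
          then have nz: "z \<noteq> 0" "z + c \<noteq> 0" using vec_add_eq0 by auto
          have zc: "z + c \<in> C" using cl zz c by auto
          have s: "card (bsupp z) + card (bsupp (z + c)) = w"
            using wt_add_sub[of z c] zz(2) unfolding w_def by simp
          have m: "card (bsupp (z + c)) mod 4 = (card (bsupp z) + w) mod 4"
            using add4 zz c unfolding w_def by blast
          have e: "even (card (bsupp z))" using ev zz by blast
          have p1: "card (bsupp z) > 0" using nz bsupp_empty by (metis card_gt_0_iff finite)
          have p2: "card (bsupp (z + c)) > 0" using nz bsupp_empty by (metis card_gt_0_iff finite)
          have i1: "card (bsupp z) mod 4 = 2 \<longrightarrow> w \<le> card (bsupp z)"
            using cmin zz unfolding w_def by blast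
          have i2: "card (bsupp (z + c)) mod 4 = 2 \<longrightarrow> w \<le> card (bsupp (z + c))"
            using cmin zc unfolding w_def by blast
          show False
          proof (cases "card (bsupp z) mod 4 = 2")
            case True then show False using i1 p2 s by linarith
          next
            case False
            then have "card (bsupp (z + c)) mod 4 = 2" using ar5[OF e False m w4] by blast
            then show False using i2 p1 s by linarith
          qed
        qed
      qed
      define V' where "V' = proj c ` C"
      define T' where "T' = (UNIV :: 'n set) - bsupp c"
      have "k = Suc (Suc (k - 2))" using assms(1) by linarith
      then obtain k1 where k1: "k = Suc (Suc k1)" by blast
      have "card C \<le> 2 * card V'" unfolding V'_def by (rule halving[OF cl c(1) ker])
      then have c1: "2 ^ Suc k1 \<le> card V'" using cardC k1 by simp
      have c2: "0 \<in> V'" unfolding V'_def using z by (metis image_eqI proj_zero_iff bsupp_zero empty_subsetI)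
      have c3: "\<forall>x\<in>V'. \<forall>y\<in>V'. x + y \<in> V'" unfolding V'_def using cl
        by (auto simp flip: proj_add)
      have c4: "\<forall>x\<in>V'. bsupp x \<subseteq> T'" unfolding V'_def T'_def
        by (auto simp: bsupp_proj)
      define d' where "d' = (D + 1) div 2 + (if w = D then 1 else 0)"
      have c5: "\<forall>x\<in>V'. x \<noteq> 0 \<longrightarrow> d' \<le> card (bsupp x)"
      proof (intro ballI impI)
        fix y assume "y \<in> V'" "y \<noteq> 0"
        then obtain x where x: "x \<in> C" "y = proj c x" unfolding V'_def by auto
        have nz: "x \<noteq> 0" "x + c \<noteq> 0" using x \<open>y \<noteq> 0\<close>
          by (metis proj_zero_iff bsupp_zero empty_subsetI subset_refl vec_add_eq0)+
        have xc: "x + c \<in> C" using cl x c by auto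
        have s: "card (bsupp x) + card (bsupp (x + c)) = w + 2 * card (bsupp y)"
          using wt_add_sub[of x c] x unfolding w_def by (simp add: bsupp_proj)
        have m: "card (bsupp (x + c)) mod 4 = (card (bsupp x) + w) mod 4"
          using add4 x c unfolding w_def by blast
        have e: "even (card (bsupp x))" using ev x by blast
        have i1: "card (bsupp x) mod 4 = 2 \<longrightarrow> w \<le> card (bsupp x)"
          using cmin x unfolding w_def by blast
        have i2: "card (bsupp (x + c)) mod 4 = 2 \<longrightarrow> w \<le> card (bsupp (x + c))"
          using cmin xc unfolding w_def by blast
        have j1: "D \<le> card (bsupp x)" using wD x nz by blast
        have j2: "D \<le> card (bsupp (x + c))" using wD xc nz by blast
        have ge: "w + D \<le> card (bsupp x) + card (bsupp (x + c))"
        proof (cases "card (bsupp x) mod 4 = 2")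
          case True then show ?thesis using i1 j2 by linarith
        next
          case False
          then have "card (bsupp (x + c)) mod 4 = 2" using ar5[OF e False m w4] by blast
          then show ?thesis using i2 j1 by linarith
        qed
        then have ge2: "D \<le> 2 * card (bsupp y)" using s by linarith
        show "d' \<le> card (bsupp y)"
        proof (cases "w = D")
          case True
          have "(card (bsupp x) + card (bsupp (x + c))) mod 4 = 2" using ar1[OF m e w4] .
          then have "even (card (bsupp y))" using ar2[OF s _ w4] by blast
          moreover have "D mod 4 = 2" using w4 True by simp
          ultimately have "(D + 1) div 2 + 1 \<le> card (bsupp y)" using ar3[OF _ ge2] by blast
          then show ?thesis unfolding d'_def using True by simp
        next
          case False
          then show ?thesis unfolding d'_def using ar4[OF ge2] by simp
        qed
      qed
      have gb: "g (Suc k1) d' \<le> card T'" by (rule griesmer_bound[OF c2 c3 c1 c4 c5])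
      have cT: "card T' = N - w" unfolding T'_def NN w_def
        by (simp add: card_Diff_subset)
      have wN: "w \<le> N" unfolding NN w_def by (simp add: card_mono)
      have NG': "N = D + g (Suc k1) ((D + 1) div 2)" using NG k1 by simp
      show False
      proof (cases "w = D")
        case True
        then have "g (Suc k1) d' = g (Suc k1) ((D + 1) div 2 + 1)" unfolding d'_def by simp
        moreover have "g (Suc k1) ((D + 1) div 2) < g (Suc k1) ((D + 1) div 2 + 1)" by (rule g_strict)
        ultimately show False using gb cT NG' True by linarith
      next
        case False
        then have "g (Suc k1) ((D + 1) div 2) \<le> g (Suc k1) d'" unfolding d'_def by (intro g_mono) simp
        then show False using gb cT NG' False wD' wN by linarith
      qed
    qed
  next
    assume de: "doubly_even C"
    show "self_orthogonal C"
      unfolding self_orthogonal_def bin_inner_0_iff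
    proof (intro ballI)
      fix x y assume xy: "x \<in> C" "y \<in> C"
      then have "x + y \<in> C" using cl by blast
      then have "4 dvd card (bsupp x)" "4 dvd card (bsupp y)" "4 dvd card (bsupp (x + y))"
        using de xy unfolding doubly_even_def hw_bsupp by auto
      then show "even (card (bsupp x \<inter> bsupp y))" using ar9 wt_add[of x y] by blast
    qed
  qed
qed

end
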